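(* Let $(X,d_X)$ and $(Y,d_Y)$ be ultrametric spaces and let $d$ be a partial distance-preserving metric on $X\times Y$ such that $d_\infty\le d$ on $(X\times Y)\times(X\times Y)$. Then the following are equivalent: (i) $d$ is an ultrametric on $X\times Y$; (ii) for all compact sets $W\subseteq X$, $Z\subseteq Y$ and every $\varepsilon>0$, $$\mathcal M_\varepsilon(W\times Z)=\mathcal M_\varepsilon(W)\cdot\mathcal M_\varepsilon(Z),$$ where $\mathcal M_\varepsilon(W)$, $\mathcal M_\varepsilon(Z)$, $\mathcal M_\varepsilon(W\times Z)$ are computed in $(X,d_X)$, $(Y,d_Y)$, $(X\times Y,d)$ respectively.
   Context: $d_\infty((x_1,y_1),(x_2,y_2))=\max\{d_X(x_1,x_2),d_Y(y_1,y_2)\}$. A metric $d$ on $X\times Y$ is partial distance-preserving if $d((x_1,y),(x_2,y))=d_X(x_1,x_2)$ and $d((x,y_1),(x,y_2))=d_Y(y_1,y_2)$ for all $x,x_1,x_2\in X$, $y,y_1,y_2\in Y$. A metric $\rho$ is an ultrametric if $\rho(a,b)\le\max\{\rho(a,c),\rho(c,b)\}$. In a metric space $(M,\rho)$, a set $A$ is $\varepsilon$-distinguishable if $\rho(a,b)>\varepsilon$ for distinct $a,b\in A$, and for a totally bounded $V\subseteq M$ the packing number $\mathcal M_\varepsilon(V)$ is the maximal cardinality of an $\varepsilon$-distinguishable subset of $V$ (so $\mathcal M_\varepsilon(\emptyset)=0$). *)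

theory Defs
  imports "HOL-Analysis.Analysis"
begin

definition ultrametric :: "'a set \<Rightarrow> ('a \<Rightarrow> 'a \<Rightarrow> real) \<Rightarrow> bool" where
  "ultrametric M \<rho> \<longleftrightarrow> Metric_space M \<rho> \<and>
     (\<forall>a\<in>M. \<forall>b\<in>M. \<forall>c\<in>M. \<rho> a b \<le> max (\<rho> a c) (\<rho> c b))"

definition dinf :: "('a \<Rightarrow> 'a \<Rightarrow> real) \<Rightarrow> ('b \<Rightarrow> 'b \<Rightarrow> real) \<Rightarrow> ('a \<times> 'b) \<Rightarrow> ('a \<times> 'b) \<Rightarrow> real" where
  "dinf dX dY p q = max (dX (fst p) (fst q)) (dY (snd p) (snd q))"

definition partial_distance_preserving ::
  "'a set \<Rightarrow> ('a \<Rightarrow> 'a \<Rightarrow> real) \<Rightarrow> 'b set \<Rightarrow> ('b \<Rightarrow> 'b \<Rightarrow> real) \<Rightarrow> ('a \<times> 'b \<Rightarrow> 'a \<times> 'b \<Rightarrow> real) \<Rightarrow> bool" where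
  "partial_distance_preserving X dX Y dY d \<longleftrightarrow>
     (\<forall>x1\<in>X. \<forall>x2\<in>X. \<forall>y\<in>Y. d (x1, y) (x2, y) = dX x1 x2) \<and>
     (\<forall>x\<in>X. \<forall>y1\<in>Y. \<forall>y2\<in>Y. d (x, y1) (x, y2) = dY y1 y2)"

definition eps_distinguishable :: "('a \<Rightarrow> 'a \<Rightarrow> real) \<Rightarrow> real \<Rightarrow> 'a set \<Rightarrow> bool" where
  "eps_distinguishable \<rho> \<epsilon> A \<longleftrightarrow> (\<forall>a\<in>A. \<forall>b\<in>A. a \<noteq> b \<longrightarrow> \<rho> a b > \<epsilon>)"

text \<open>Packing number: maximal cardinality of an eps-distinguishable subset of V
  (for totally bounded V such subsets are finite and of bounded size).\<close>
definition packing_number :: "('a \<Rightarrow> 'a \<Rightarrow> real) \<Rightarrow> real \<Rightarrow> 'a set \<Rightarrow> nat" where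
  "packing_number \<rho> \<epsilon> V = Sup {card A | A. A \<subseteq> V \<and> finite A \<and> eps_distinguishable \<rho> \<epsilon> A}"

end

theory Submission
  imports Defs
begin

lemma pack_eq:
  assumes ult: "\<forall>a\<in>V. \<forall>b\<in>V. \<forall>c\<in>V. \<rho> a b \<le> max (\<rho> a c) (\<rho> c b)"
    and sym: "\<And>a b. \<rho> a b = \<rho> b a"
    and SV: "S \<subseteq> V" and fS: "finite S" and dS: "eps_distinguishable \<rho> \<epsilon> S"
    and cov: "\<forall>w\<in>V. \<exists>s\<in>S. \<rho> w s \<le> \<epsilon>"
  shows "packing_number \<rho> \<epsilon> V = card S"
proof -
  let ?K = "{card A | A. A \<subseteq> V \<and> finite A \<and> eps_distinguishable \<rho> \<epsilon> A}"
  have mem: "card S \<in> ?K" using SV fS dS by blast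
  have le: "k \<le> card S" if kK: "k \<in> ?K" for k
  proof -
    obtain A where A: "k = card A" "A \<subseteq> V" "finite A" "eps_distinguishable \<rho> \<epsilon> A"
      using kK by blast
    define f where "f a = (SOME s. s \<in> S \<and> \<rho> a s \<le> \<epsilon>)" for a
    have f: "f a \<in> S \<and> \<rho> a (f a) \<le> \<epsilon>" if "a \<in> A" for a
      unfolding f_def by (rule someI_ex) (use cov A(2) that in blast)
    have "inj_on f A"
    proof (rule inj_onI)
      fix a b assume ab: "a \<in> A" "b \<in> A" "f a = f b"
      have m: "a \<in> V" "b \<in> V" "f a \<in> V" using A(2) ab(1,2) f[OF ab(1)] SV by auto
      have "\<rho> a b \<le> max (\<rho> a (f a)) (\<rho> (f a) b)"
        using ult m by blast
      also have "\<dots> \<le> \<epsilon>" using f[OF ab(1)] f[OF ab(2)] ab(3) sym by simp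
      finally show "a = b" using A(4) ab unfolding eps_distinguishable_def by force
    qed
    moreover have "f ` A \<subseteq> S" using f by blast
    ultimately show ?thesis using A(1) card_inj_on_le fS by blast
  qed
  show ?thesis unfolding packing_number_def
    by (rule cSup_eq_maximum[OF mem]) (use le in blast)
qed

lemma ult_subset:
  assumes "\<forall>a\<in>M. \<forall>b\<in>M. \<forall>c\<in>M. \<rho> a b \<le> max (\<rho> a c) (\<rho> c b)" and "V \<subseteq> M"
  shows "\<forall>a\<in>V. \<forall>b\<in>V. \<forall>c\<in>V. \<rho> a b \<le> max (\<rho> a c) (\<rho> c b)"
  using assms by blast

lemma finite_net:
  assumes sym: "\<And>a b. \<rho> a b = \<rho> b a" and "finite K" and "\<forall>k\<in>K. \<rho> k k \<le> \<epsilon>"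
  shows "\<exists>S\<subseteq>K. finite S \<and> eps_distinguishable \<rho> \<epsilon> S \<and> (\<forall>k\<in>K. \<exists>s\<in>S. \<rho> k s \<le> \<epsilon>)"
  using assms(2,3)
proof (induction K rule: finite_induct)
  case empty
  then show ?case by (auto simp: eps_distinguishable_def)
next
  case (insert k K)
  then obtain S where S: "S \<subseteq> K" "finite S" "eps_distinguishable \<rho> \<epsilon> S" "\<forall>k\<in>K. \<exists>s\<in>S. \<rho> k s \<le> \<epsilon>"
    by blast
  show ?case
  proof (cases "\<exists>s\<in>S. \<rho> k s \<le> \<epsilon>")
    case True
    then show ?thesis using S by blast
  next
    case False
    have "eps_distinguishable \<rho> \<epsilon> (insert k S)"
      unfolding eps_distinguishable_def
    proof (intro ballI impI)
      fix a b assume ab: "a \<in> insert k S" "b \<in> insert k S" "a \<noteq> b"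
      show "\<epsilon> < \<rho> a b"
      proof (cases "a = k")
        case True
        then have "b \<in> S" using ab by auto
        then show ?thesis using False True sym[of k b] by auto
      next
        case ak: False
        show ?thesis
        proof (cases "b = k")
          case True
          then have "a \<in> S" using ab ak by auto
          then show ?thesis using False True sym[of a k] by auto
        next
          case False
          then show ?thesis using ak ab S(3) unfolding eps_distinguishable_def by auto
        qed
      qed
    qed
    then show ?thesis using S insert.prems
      by (rule_tac x="insert k S" in exI) auto
  qed
qed

lemma compact_net:
  assumes u: "ultrametric M \<rho>" and c: "compactin (Metric_space.mtopology M \<rho>) W" and e: "\<epsilon> > 0"
  shows "\<exists>S\<subseteq>W. finite S \<and> eps_distinguishable \<rho> \<epsilon> S \<and> (\<forall>w\<in>W. \<exists>s\<in>S. \<rho> w s \<le> \<epsilon>)"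
proof -
  have ms: "Metric_space M \<rho>" using u unfolding ultrametric_def by simp
  have ul: "\<forall>a\<in>M. \<forall>b\<in>M. \<forall>c\<in>M. \<rho> a b \<le> max (\<rho> a c) (\<rho> c b)" using u unfolding ultrametric_def by simp
  have WM: "W \<subseteq> M" using compactin_subset_topspace[OF c] Metric_space.topspace_mtopology[OF ms] by simp
  have "Metric_space.mtotally_bounded M \<rho> W"
    using Metric_space.compactin_imp_mtotally_bounded[OF ms c] .
  then have "\<exists>K. finite K \<and> K \<subseteq> W \<and> W \<subseteq> (\<Union>x\<in>K. Metric_space.mball M \<rho> x \<epsilon>)"
    unfolding Metric_space.mtotally_bounded_def[OF ms] using e by simp
  then obtain K where K: "finite K" "K \<subseteq> W" "W \<subseteq> (\<Union>x\<in>K. Metric_space.mball M \<rho> x \<epsilon>)"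
    by (elim exE conjE)
  have sym: "\<And>a b. \<rho> a b = \<rho> b a" using Metric_space.commute[OF ms] .
  have kk: "\<forall>k\<in>K. \<rho> k k \<le> \<epsilon>"
  proof
    fix k assume "k \<in> K"
    then have "k \<in> M" using K(2) WM by (simp add: subset_iff)
    then have "\<rho> k k = 0" using Metric_space.zero[OF ms, of k k] by simp
    then show "\<rho> k k \<le> \<epsilon>" using e by simp
  qed
  obtain S where S: "S \<subseteq> K" "finite S" "eps_distinguishable \<rho> \<epsilon> S" "\<forall>k\<in>K. \<exists>s\<in>S. \<rho> k s \<le> \<epsilon>"
    using finite_net[where \<rho>=\<rho>, OF sym K(1) kk] by (elim exE conjE)
  have cv: "\<exists>s\<in>S. \<rho> w s \<le> \<epsilon>" if w: "w \<in> W" for w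
  proof -
    have "w \<in> (\<Union>x\<in>K. Metric_space.mball M \<rho> x \<epsilon>)" using K(3) w by (simp add: subset_iff)
    then obtain k where k: "k \<in> K" "w \<in> Metric_space.mball M \<rho> k \<epsilon>" by (elim UN_E)
    then have kw: "\<rho> k w < \<epsilon>" using Metric_space.in_mball[OF ms] by simp
    obtain s where s: "s \<in> S" "\<rho> k s \<le> \<epsilon>" using S(4) k(1) by blast
    have m: "w \<in> M" "k \<in> M" "s \<in> M" using w k(1) s(1) S(1) K(2) WM by (simp_all add: subset_iff)
    have "\<rho> w s \<le> max (\<rho> w k) (\<rho> k s)" using ul m by simp
    moreover have "\<rho> w k < \<epsilon>" using kw sym[of k w] by simp
    ultimately have "\<rho> w s \<le> \<epsilon>" using s(2) by linarith
    then show ?thesis using s(1) by (rule_tac bexI)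
  qed
  have "S \<subseteq> W" using S(1) K(2) by (rule order_trans)
  then show ?thesis using S(2,3) cv by (intro exI[of _ S]) simp
qed

lemma pack_le1:
  assumes "\<rho> u v \<le> \<epsilon>" and sym: "\<And>a b. \<rho> a b = \<rho> b a"
  shows "packing_number \<rho> \<epsilon> {u, v} \<le> 1"
  unfolding packing_number_def
proof (rule cSup_least)
  show "{card A |A. A \<subseteq> {u, v} \<and> finite A \<and> eps_distinguishable \<rho> \<epsilon> A} \<noteq> {}"
  proof -
    have "0 \<in> {card A |A. A \<subseteq> {u, v} \<and> finite A \<and> eps_distinguishable \<rho> \<epsilon> A}"
      by (rule CollectI, rule exI[of _ "{}"]) (auto simp: eps_distinguishable_def)
    then show ?thesis by blast
  qed
next
  fix k assume "k \<in> {card A |A. A \<subseteq> {u, v} \<and> finite A \<and> eps_distinguishable \<rho> \<epsilon> A}"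
  then obtain A where A: "k = card A" "A \<subseteq> {u,v}" "eps_distinguishable \<rho> \<epsilon> A" by blast
  show "k \<le> 1"
  proof (rule ccontr)
    assume "\<not> k \<le> 1"
    then have c2: "card A \<ge> 2" using A(1) by linarith
    have fin: "finite {u,v}" by simp
    have "card A \<le> card {u,v}" using card_mono[OF fin A(2)] .
    moreover have "card {u,v} \<le> 2" by (cases "u = v") simp_all
    ultimately have c: "card A = card {u,v}" "card {u,v} = 2" using c2 by linarith+
    have AA: "A = {u,v}" using card_subset_eq[OF fin A(2) c(1)] .
    have "u \<noteq> v"
    proof
      assume "u = v" then show False using c(2) by simp
    qed
    note AA this
    then show False using A(3) assms(1) unfolding eps_distinguishable_def by force
  qed
qed


theorem theorem4p1:
  fixes X :: "'a set" and dX :: "'a \<Rightarrow> 'a \<Rightarrow> real"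
    and Y :: "'b set" and dY :: "'b \<Rightarrow> 'b \<Rightarrow> real"
    and d :: "'a \<times> 'b \<Rightarrow> 'a \<times> 'b \<Rightarrow> real"
  assumes "ultrametric X dX" and "ultrametric Y dY"
    and "Metric_space (X \<times> Y) d"
    and "partial_distance_preserving X dX Y dY d"
    and "\<forall>p\<in>X \<times> Y. \<forall>q\<in>X \<times> Y. dinf dX dY p q \<le> d p q"
  shows "ultrametric (X \<times> Y) d \<longleftrightarrow>
    (\<forall>W Z \<epsilon>. compactin (Metric_space.mtopology X dX) W \<longrightarrow>
              compactin (Metric_space.mtopology Y dY) Z \<longrightarrow> \<epsilon> > 0 \<longrightarrow>
       packing_number d \<epsilon> (W \<times> Z) = packing_number dX \<epsilon> W * packing_number dY \<epsilon> Z)"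
proof -
  have msX: "Metric_space X dX" and ulX: "\<forall>a\<in>X. \<forall>b\<in>X. \<forall>c\<in>X. dX a b \<le> max (dX a c) (dX c b)"
    using assms(1) unfolding ultrametric_def by simp_all
  have msY: "Metric_space Y dY" and ulY: "\<forall>a\<in>Y. \<forall>b\<in>Y. \<forall>c\<in>Y. dY a b \<le> max (dY a c) (dY c b)"
    using assms(2) unfolding ultrametric_def by simp_all
  have ms: "Metric_space (X \<times> Y) d" by fact
  have symX: "\<And>a b. dX a b = dX b a" using Metric_space.commute[OF msX] .
  have symY: "\<And>a b. dY a b = dY b a" using Metric_space.commute[OF msY] .
  have sym: "\<And>a b. d a b = d b a" using Metric_space.commute[OF ms] .
  have pX: "\<And>x1 x2 y. x1 \<in> X \<Longrightarrow> x2 \<in> X \<Longrightarrow> y \<in> Y \<Longrightarrow> d (x1, y) (x2, y) = dX x1 x2"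
    and pY: "\<And>x y1 y2. x \<in> X \<Longrightarrow> y1 \<in> Y \<Longrightarrow> y2 \<in> Y \<Longrightarrow> d (x, y1) (x, y2) = dY y1 y2"
    using assms(4) unfolding partial_distance_preserving_def by simp_all
  have ge: "max (dX x1 x2) (dY y1 y2) \<le> d (x1, y1) (x2, y2)"
    if "x1 \<in> X" "x2 \<in> X" "y1 \<in> Y" "y2 \<in> Y" for x1 y1 x2 y2
  proof -
    have "(x1,y1) \<in> X \<times> Y" "(x2,y2) \<in> X \<times> Y" using that by auto
    then have "dinf dX dY (x1,y1) (x2,y2) \<le> d (x1,y1) (x2,y2)" using assms(5) by blast
    then show ?thesis by (simp add: dinf_def)
  qed
  show ?thesis
  proof
    assume U: "ultrametric (X \<times> Y) d"
    have ul: "\<forall>a\<in>X\<times>Y. \<forall>b\<in>X\<times>Y. \<forall>c\<in>X\<times>Y. d a b \<le> max (d a c) (d c b)"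
      using U unfolding ultrametric_def by blast
    show "\<forall>W Z \<epsilon>. compactin (Metric_space.mtopology X dX) W \<longrightarrow>
              compactin (Metric_space.mtopology Y dY) Z \<longrightarrow> \<epsilon> > 0 \<longrightarrow>
       packing_number d \<epsilon> (W \<times> Z) = packing_number dX \<epsilon> W * packing_number dY \<epsilon> Z"
    proof (intro allI impI)
      fix W Z and \<epsilon> :: real
      assume cW: "compactin (Metric_space.mtopology X dX) W"
        and cZ: "compactin (Metric_space.mtopology Y dY) Z" and e: "\<epsilon> > 0"
      have WX: "W \<subseteq> X" using compactin_subset_topspace[OF cW] Metric_space.topspace_mtopology[OF msX] by simp
      have ZY: "Z \<subseteq> Y" using compactin_subset_topspace[OF cZ] Metric_space.topspace_mtopology[OF msY] by simp
      obtain S where S: "S \<subseteq> W" "finite S" "eps_distinguishable dX \<epsilon> S" "\<forall>w\<in>W. \<exists>s\<in>S. dX w s \<le> \<epsilon>"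
        using compact_net[OF assms(1) cW e] by blast
      obtain T where T: "T \<subseteq> Z" "finite T" "eps_distinguishable dY \<epsilon> T" "\<forall>w\<in>Z. \<exists>s\<in>T. dY w s \<le> \<epsilon>"
        using compact_net[OF assms(2) cZ e] by blast
      have pW: "packing_number dX \<epsilon> W = card S"
        by (rule pack_eq[OF _ symX S(1) S(2) S(3) S(4)]) (rule ult_subset[OF ulX WX])
      have pZ: "packing_number dY \<epsilon> Z = card T"
        by (rule pack_eq[OF _ symY T(1) T(2) T(3) T(4)]) (rule ult_subset[OF ulY ZY])
      have dist: "eps_distinguishable d \<epsilon> (S \<times> T)"
        unfolding eps_distinguishable_def
      proof (intro ballI impI)
        fix p q assume pq: "p \<in> S \<times> T" "q \<in> S \<times> T" "p \<noteq> q"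
        obtain x1 y1 x2 y2 where pq': "p = (x1,y1)" "q = (x2,y2)" by (cases p, cases q) auto
        have mem: "x1 \<in> X" "x2 \<in> X" "y1 \<in> Y" "y2 \<in> Y" using pq pq' S(1) T(1) WX ZY by auto
        have "\<epsilon> < max (dX x1 x2) (dY y1 y2)"
        proof (cases "x1 = x2")
          case True
          then have "y1 \<noteq> y2" using pq pq' by auto
          then have "\<epsilon> < dY y1 y2" using T(3) pq pq' unfolding eps_distinguishable_def by auto
          then show ?thesis by linarith
        next
          case False
          then have "\<epsilon> < dX x1 x2" using S(3) pq pq' unfolding eps_distinguishable_def by auto
          then show ?thesis by linarith
        qed
        then show "\<epsilon> < d p q" unfolding pq'(1,2) using ge[OF mem(1,2,3,4)] by linarith
      qed
      have cov: "\<forall>w\<in>W\<times>Z. \<exists>s\<in>S\<times>T. d w s \<le> \<epsilon>"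
      proof
        fix p assume p: "p \<in> W \<times> Z"
        obtain w z where wz: "p = (w,z)" "w \<in> W" "z \<in> Z" using p by auto
        obtain s where s: "s \<in> S" "dX w s \<le> \<epsilon>" using S(4) wz by blast
        obtain t where t: "t \<in> T" "dY z t \<le> \<epsilon>" using T(4) wz by blast
        have mem: "w \<in> X" "z \<in> Y" "s \<in> X" "t \<in> Y" using wz s t S(1) T(1) WX ZY by auto
        have "d (w,z) (s,t) \<le> max (d (w,z) (s,z)) (d (s,z) (s,t))"
          by (rule ul[rule_format]) (use mem in auto)
        also have "\<dots> = max (dX w s) (dY z t)" using pX pY mem by simp
        finally show "\<exists>q\<in>S\<times>T. d p q \<le> \<epsilon>" using s t wz by (intro bexI[of _ "(s,t)"]) auto
      qed
      have "packing_number d \<epsilon> (W \<times> Z) = card (S \<times> T)"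
      proof (rule pack_eq[OF _ sym _ _ dist cov])
        show "\<forall>a\<in>W \<times> Z. \<forall>b\<in>W \<times> Z. \<forall>c\<in>W \<times> Z. d a b \<le> max (d a c) (d c b)"
          by (rule ult_subset[OF ul]) (use WX ZY in auto)
        show "S \<times> T \<subseteq> W \<times> Z" using S(1) T(1) by auto
        show "finite (S \<times> T)" using S(2) T(2) by simp
      qed
      then show "packing_number d \<epsilon> (W \<times> Z) = packing_number dX \<epsilon> W * packing_number dY \<epsilon> Z"
        using pW pZ by (simp add: card_cartesian_product)
    qed
  next
    assume H: "\<forall>W Z \<epsilon>. compactin (Metric_space.mtopology X dX) W \<longrightarrow>
              compactin (Metric_space.mtopology Y dY) Z \<longrightarrow> \<epsilon> > 0 \<longrightarrow>
       packing_number d \<epsilon> (W \<times> Z) = packing_number dX \<epsilon> W * packing_number dY \<epsilon> Z"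
    have eq: "d (x1,y1) (x2,y2) = max (dX x1 x2) (dY y1 y2)"
      if mem: "x1 \<in> X" "x2 \<in> X" "y1 \<in> Y" "y2 \<in> Y" for x1 x2 y1 y2
    proof (rule ccontr)
      assume ne: "d (x1,y1) (x2,y2) \<noteq> max (dX x1 x2) (dY y1 y2)"
      then have lt: "max (dX x1 x2) (dY y1 y2) < d (x1,y1) (x2,y2)" using ge[OF mem] by linarith
      have "x1 \<noteq> x2"
      proof
        assume "x1 = x2"
        then have "d (x1,y1) (x2,y2) = dY y1 y2" "dX x1 x2 = 0" using pY mem Metric_space.zero[OF msX] by auto
        then show False using ne Metric_space.nonneg[OF msY, of y1 y2] by simp
      qed
      then have a: "dX x1 x2 > 0" using Metric_space.zero[OF msX] Metric_space.nonneg[OF msX] mem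
        by (metis order_le_less)
      define \<epsilon> where "\<epsilon> = max (dX x1 x2) (dY y1 y2)"
      have e: "\<epsilon> > 0" using a unfolding \<epsilon>_def by simp
      have cW: "compactin (Metric_space.mtopology X dX) {x1,x2}"
        by (rule finite_imp_compactin) (use mem Metric_space.topspace_mtopology[OF msX] in auto)
      have cZ: "compactin (Metric_space.mtopology Y dY) {y1,y2}"
        by (rule finite_imp_compactin) (use mem Metric_space.topspace_mtopology[OF msY] in auto)
      have eqp: "packing_number d \<epsilon> ({x1,x2} \<times> {y1,y2}) = packing_number dX \<epsilon> {x1,x2} * packing_number dY \<epsilon> {y1,y2}"
        using H cW cZ e by blast
      have "packing_number dX \<epsilon> {x1,x2} \<le> 1" by (rule pack_le1[OF _ symX]) (simp add: \<epsilon>_def)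
      moreover have "packing_number dY \<epsilon> {y1,y2} \<le> 1" by (rule pack_le1[OF _ symY]) (simp add: \<epsilon>_def)
      ultimately have le1: "packing_number d \<epsilon> ({x1,x2} \<times> {y1,y2}) \<le> 1"
        using eqp mult_le_mono[of "packing_number dX \<epsilon> {x1,x2}" 1 "packing_number dY \<epsilon> {y1,y2}" 1] by simp
      let ?K = "{card A | A. A \<subseteq> {x1,x2} \<times> {y1,y2} \<and> finite A \<and> eps_distinguishable d \<epsilon> A}"
      have dpq: "eps_distinguishable d \<epsilon> {(x1,y1),(x2,y2)}"
        unfolding eps_distinguishable_def
      proof (intro ballI impI)
        fix p q assume "p \<in> {(x1,y1),(x2,y2)}" "q \<in> {(x1,y1),(x2,y2)}" "p \<noteq> q"
        then have "(p = (x1,y1) \<and> q = (x2,y2)) \<or> (p = (x2,y2) \<and> q = (x1,y1))" by blast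
        then show "\<epsilon> < d p q"
        proof
          assume "p = (x1,y1) \<and> q = (x2,y2)" then show ?thesis using lt unfolding \<epsilon>_def by simp
        next
          assume "p = (x2,y2) \<and> q = (x1,y1)" then show ?thesis using lt sym[of "(x1,y1)" "(x2,y2)"] unfolding \<epsilon>_def by simp
        qed
      qed
      have "card {(x1,y1),(x2,y2)} \<in> ?K"
        by (rule CollectI, rule exI[of _ "{(x1,y1),(x2,y2)}"]) (use dpq in blast)
      moreover have "bdd_above ?K"
        by (rule bdd_aboveI[of _ "card ({x1,x2} \<times> {y1,y2})"]) (use card_mono[of "{x1,x2} \<times> {y1,y2}"] in fastforce)
      ultimately have "card {(x1,y1),(x2,y2)} \<le> packing_number d \<epsilon> ({x1,x2} \<times> {y1,y2})"
        unfolding packing_number_def by (rule cSup_upper)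
      moreover have "card {(x1,y1),(x2,y2)} = 2" using \<open>x1 \<noteq> x2\<close> by simp
      ultimately show False using le1 by simp
    qed
    show "ultrametric (X \<times> Y) d"
      unfolding ultrametric_def
    proof (intro conjI ms ballI)
      fix a b c assume abc: "a \<in> X \<times> Y" "b \<in> X \<times> Y" "c \<in> X \<times> Y"
      obtain a1 a2 b1 b2 c1 c2 where E: "a = (a1,a2)" "b = (b1,b2)" "c = (c1,c2)" by (cases a, cases b, cases c) auto
      have m: "a1 \<in> X" "a2 \<in> Y" "b1 \<in> X" "b2 \<in> Y" "c1 \<in> X" "c2 \<in> Y" using abc E by auto
      have h: "dX a1 b1 \<le> max (dX a1 c1) (dX c1 b1)" "dY a2 b2 \<le> max (dY a2 c2) (dY c2 b2)"
        using ulX ulY m by blast+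
      have "d a b = max (dX a1 b1) (dY a2 b2)" "d a c = max (dX a1 c1) (dY a2 c2)" "d c b = max (dX c1 b1) (dY c2 b2)"
        using eq m E by simp_all
      then show "d a b \<le> max (d a c) (d c b)" using h by linarith
    qed
  qed
qed

end
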